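(* For every integer $m\ge1$ and every $\beta\in\mathbb{R}$, with $F_m(i,\beta)$ denoting the value at $x=\frac12$ (i.e. $e^{i\pi x}=i$) of $$F_m(e^{i\pi x},\beta)=e^{m\pi ix}e^{-2\pi i\beta x}\frac{\sin^m\pi x}{\pi^{m-1}}\frac{d^{m-1}}{dx^{m-1}}\Big((i-\cot\pi x)e^{2\pi i\beta x}\Big),$$ one has $F_m(i,\beta)=2^{m-1}i^me^{m\pi i/2}E_{m-1}(\beta)$.
   Context: Bernoulli numbers: $B_0=1$, $B_n=-\frac1{n+1}\sum_{k=0}^{n-1}\binom{n+1}{k}B_k$. Euler polynomials: $E_n(x)=\frac{1}{n+1}\sum_{k=1}^{n+1}\binom{n+1}{k}(2-2^{k+1})B_kx^{n+1-k}$ (so $E_0=1$, $E_1(x)=x-\frac12$, $E_2(x)=x^2-x$). *)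

theory Defs
  imports "HOL-Analysis.Analysis"
begin

fun bernoulli_num :: "nat \<Rightarrow> real" where
  "bernoulli_num n =
     (if n = 0 then 1
      else - (1 / real (n + 1)) * (\<Sum>k<n. real ((n + 1) choose k) * bernoulli_num k))"

definition euler_poly :: "nat \<Rightarrow> real \<Rightarrow> real" where
  "euler_poly n x = (1 / real (n + 1)) *
     (\<Sum>k=1..n+1. real ((n + 1) choose k) * (2 - 2 ^ (k + 1)) * bernoulli_num k * x ^ (n + 1 - k))"

fun higher_vderiv :: "nat \<Rightarrow> (real \<Rightarrow> complex) \<Rightarrow> real \<Rightarrow> complex" where
  "higher_vderiv 0 f = f"
| "higher_vderiv (Suc n) f = (\<lambda>x. vector_derivative (higher_vderiv n f) (at x))"

definition F_fun :: "nat \<Rightarrow> real \<Rightarrow> real \<Rightarrow> complex" where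
  "F_fun m \<beta> x =
     exp (of_nat m * pi * \<i> * x) * exp (- 2 * pi * \<i> * \<beta> * x) *
     (complex_of_real (sin (pi * x)) ^ m / complex_of_real (pi ^ (m - 1))) *
     higher_vderiv (m - 1)
       (\<lambda>t. (\<i> - complex_of_real (cot (pi * t))) * exp (2 * pi * \<i> * \<beta> * t)) x"

end

theory Submission
  imports Defs "HOL-Computational_Algebra.Formal_Power_Series" "HOL-Complex_Analysis.Complex_Analysis"
begin

declare bernoulli_num.simps[simp del]

lemma bern0[simp]: "bernoulli_num 0 = 1" by (simp add: bernoulli_num.simps)

lemma bern_sum:
  assumes "n \<ge> 1"
  shows "(\<Sum>k\<le>n. real (Suc n choose k) * bernoulli_num k) = 0"
proof -
  have b: "bernoulli_num n = - (1 / real (n + 1)) * (\<Sum>k<n. real ((n + 1) choose k) * bernoulli_num k)"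
    using assms by (subst bernoulli_num.simps) simp
  have "(\<Sum>k\<le>n. real (Suc n choose k) * bernoulli_num k)
      = (\<Sum>k<n. real (Suc n choose k) * bernoulli_num k) + real (n+1) * bernoulli_num n"
    by (simp add: lessThan_Suc_atMost[symmetric])
  also have "\<dots> = 0" unfolding b by (simp add: field_simps)
  finally show ?thesis .
qed

definition Bf :: "real \<Rightarrow> real fps" where
  "Bf c = Abs_fps (\<lambda>n. c ^ n * bernoulli_num n / fact n)"

lemma Bf_eq: "Bf c * (fps_exp c - 1) = fps_const c * fps_X"
proof (rule fps_ext)
  fix N
  show "fps_nth (Bf c * (fps_exp c - 1)) N = fps_nth (fps_const c * fps_X) N"
  proof (cases N)
    case 0 then show ?thesis by (simp add: Bf_def)
  next
    case (Suc n)
    have "fps_nth (Bf c * (fps_exp c - 1)) N =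
       (\<Sum>i=0..Suc n. c ^ i * bernoulli_num i / fact i * (if Suc n - i = 0 then 0 else c ^ (Suc n - i) / fact (Suc n - i)))"
      unfolding Suc fps_mult_nth by (intro sum.cong refl) (simp add: Bf_def)
    also have "\<dots> = (\<Sum>i\<le>n. c ^ Suc n / fact (Suc n) * (real (Suc n choose i) * bernoulli_num i))"
    proof -
      have "(\<Sum>i=0..Suc n. c ^ i * bernoulli_num i / fact i * (if Suc n - i = 0 then 0 else c ^ (Suc n - i) / fact (Suc n - i)))
          = (\<Sum>i=0..n. c ^ i * bernoulli_num i / fact i * (if Suc n - i = 0 then 0 else c ^ (Suc n - i) / fact (Suc n - i)))"
        by (subst sum.atLeast0_atMost_Suc) simp
      also have "\<dots> = (\<Sum>i\<le>n. c ^ Suc n / fact (Suc n) * (real (Suc n choose i) * bernoulli_num i))"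
      proof (unfold atMost_atLeast0, intro sum.cong refl)
        fix i assume i: "i \<in> {0..n}"
        then have "Suc n - i \<noteq> 0" by auto
        moreover have "real (Suc n choose i) = fact (Suc n) / (fact i * fact (Suc n - i))"
          using i by (intro binomial_fact) auto
        moreover have "c ^ Suc n = c ^ i * c ^ (Suc n - i)"
          using i by (simp add: power_add[symmetric])
        ultimately show "c ^ i * bernoulli_num i / fact i * (if Suc n - i = 0 then 0 else c ^ (Suc n - i) / fact (Suc n - i))
           = c ^ Suc n / fact (Suc n) * (real (Suc n choose i) * bernoulli_num i)"
          by (simp del: fact_Suc add: field_simps)
      qed
      finally show ?thesis .
    qed
    also have "\<dots> = c ^ Suc n / fact (Suc n) * (\<Sum>i\<le>n. real (Suc n choose i) * bernoulli_num i)"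
      by (simp add: sum_distrib_left)
    also have "\<dots> = fps_nth (fps_const c * fps_X) N"
    proof (cases n)
      case 0 then show ?thesis using Suc by simp
    next
      case (Suc k) then show ?thesis using bern_sum[of n] \<open>N = Suc n\<close> by simp
    qed
    finally show ?thesis .
  qed
qed

definition Ef :: "real \<Rightarrow> real fps" where
  "Ef b = Abs_fps (\<lambda>n. euler_poly n b / fact n)"

lemma Ef_X: "fps_X * Ef b = (fps_const 2 * (Bf 1 - Bf 2)) * fps_exp b"
proof (rule fps_ext)
  fix N
  show "fps_nth (fps_X * Ef b) N = fps_nth ((fps_const 2 * (Bf 1 - Bf 2)) * fps_exp b) N"
  proof (cases N)
    case 0 then show ?thesis by (simp add: Bf_def fps_mult_nth)
  next
    case (Suc n)
    let ?g = "\<lambda>k. 2 * (bernoulli_num k / fact k - 2 ^ k * bernoulli_num k / fact k) * (b ^ (Suc n - k) / fact (Suc n - k))"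
    have "fps_nth ((fps_const 2 * (Bf 1 - Bf 2)) * fps_exp b) N = (\<Sum>k=0..Suc n. ?g k)"
      unfolding Suc by (subst fps_mult_nth, intro sum.cong refl) (simp add: Bf_def)
    also have "\<dots> = (\<Sum>k=1..Suc n. ?g k)"
      by (subst sum.atLeast_Suc_atMost) auto
    also have "\<dots> = (\<Sum>k=1..Suc n. (1 / fact (Suc n)) * (real ((n + 1) choose k) * (2 - 2 ^ (k + 1)) * bernoulli_num k * b ^ (n + 1 - k)))"
    proof (intro sum.cong refl)
      fix k assume k: "k \<in> {1..Suc n}"
      have "real ((n+1) choose k) = fact (Suc n) / (fact k * fact (Suc n - k))"
        using k by (simp only: Suc_eq_plus1[symmetric], intro binomial_fact) auto
      then show "?g k = (1 / fact (Suc n)) * (real ((n + 1) choose k) * (2 - 2 ^ (k + 1)) * bernoulli_num k * b ^ (n + 1 - k))"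
        by (simp only:) (simp del: fact_Suc add: field_simps)
    qed
    also have "\<dots> = euler_poly n b / fact n"
      unfolding euler_poly_def sum_distrib_left[symmetric] by (simp add: field_simps)
    also have "\<dots> = fps_nth (fps_X * Ef b) N"
      using Suc by (simp add: Ef_def fps_X_mult_nth)
    finally show ?thesis by simp
  qed
qed

lemma key_fps: "Ef b * (fps_exp 1 + 1) = fps_const 2 * fps_exp b"
proof -
  define e where "e = (fps_exp 1 :: real fps)"
  have e2: "fps_exp 2 = e * e" unfolding e_def using fps_exp_add_mult[of "1::real" 1] by simp
  have h1: "Bf 1 * (e - 1) = fps_X" using Bf_eq[of 1] by (simp add: e_def)
  have h2: "Bf 2 * (e * e - 1) = 2 * fps_X" using Bf_eq[of 2] e2 by (simp add: numeral_fps_const)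
  define D where "D = (Bf 1 - Bf 2) * (e + 1)"
  have "D * (e - 1) = Bf 1 * (e - 1) * (e + 1) - Bf 2 * (e * e - 1)"
    unfolding D_def by (simp add: algebra_simps)
  also have "\<dots> = fps_X * (e - 1)" unfolding h1 h2 by (simp add: algebra_simps)
  finally have "(D - fps_X) * (e - 1) = 0" by (simp add: algebra_simps)
  moreover have "e - 1 \<noteq> 0"
  proof
    assume "e - 1 = 0"
    then have "fps_nth (e - 1) 1 = 0" by simp
    then show False by (simp add: e_def)
  qed
  ultimately have D: "D = fps_X" by simp
  have "fps_X * (Ef b * (e + 1)) = 2 * D * fps_exp b"
    unfolding D_def by (simp add: Ef_X mult.assoc[symmetric] numeral_fps_const)
  also have "\<dots> = fps_X * (fps_const 2 * fps_exp b)" by (simp add: D algebra_simps numeral_fps_const)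
  finally show ?thesis unfolding e_def by simp
qed

lemma euler_rec: "(\<Sum>i\<le>n. real (n choose i) * euler_poly i b) + euler_poly n b = 2 * b ^ n"
proof -
  have "(\<Sum>i=0..n. euler_poly i b / fact i * (1 / fact (n - i) + (if n - i = 0 then 1 else 0)))
     = fps_nth (Ef b * (fps_exp 1 + 1)) n"
    unfolding fps_mult_nth by (intro sum.cong refl) (simp add: Ef_def)
  also have "\<dots> = fps_nth (fps_const 2 * fps_exp b) n" by (simp only: key_fps)
  also have "\<dots> = 2 * b ^ n / fact n" by simp
  finally have "(\<Sum>i=0..n. euler_poly i b / fact i * (1 / fact (n - i) + (if n - i = 0 then 1 else 0))) = 2 * b ^ n / fact n" .
  also have "(\<Sum>i=0..n. euler_poly i b / fact i * (1 / fact (n - i) + (if n - i = 0 then 1 else 0)))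
     = (\<Sum>i=0..n. euler_poly i b / fact i * (1 / fact (n - i))) + euler_poly n b / fact n"
  proof -
    have "(\<Sum>i=0..n. euler_poly i b / fact i * (if n - i = 0 then 1 else 0)) = (\<Sum>i=0..n. if i = n then euler_poly i b / fact i else 0)"
      by (intro sum.cong refl) auto
    also have "\<dots> = euler_poly n b / fact n" by (subst sum.delta) auto
    finally show ?thesis by (simp add: distrib_left sum.distrib del: diff_is_0_eq)
  qed
  also have "(\<Sum>i=0..n. euler_poly i b / fact i * (1 / fact (n - i))) = (\<Sum>i\<le>n. real (n choose i) * euler_poly i b) / fact n"
    unfolding sum_divide_distrib atMost_atLeast0
  proof (intro sum.cong refl)
    fix i assume i: "i \<in> {0..n}"
    have "real (n choose i) = fact n / (fact i * fact (n - i))"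
      using i by (intro binomial_fact) auto
    then show "euler_poly i b / fact i * (1 / fact (n - i)) = real (n choose i) * euler_poly i b / fact n"
      by (simp add: field_simps)
  qed
  finally show ?thesis by (simp add: field_simps)
qed


lemma exp_ne1:
  assumes "z \<in> ball (1/2 :: complex) (1/2)"
  shows "exp (2 * complex_of_real pi * \<i> * z) \<noteq> 1"
proof
  assume "exp (2 * complex_of_real pi * \<i> * z) = 1"
  then obtain n :: int where r: "Re (2 * complex_of_real pi * \<i> * z) = 0"
     and i: "Im (2 * complex_of_real pi * \<i> * z) = of_int (2 * n) * pi"
    unfolding exp_eq_1 by blast
  from r have "Im z = 0" by simp
  from i have "Re z = of_int n" by simp
  have "dist (1/2) z < 1/2" using assms by simp
  then have "cmod (1/2 - z) < 1/2" by (simp add: dist_norm)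
  moreover have "1/2 - z = complex_of_real (1/2 - of_int n)"
    using \<open>Im z = 0\<close> \<open>Re z = of_int n\<close> by (simp add: complex_eq_iff)
  ultimately have "\<bar>1/2 - of_int n\<bar> < (1/2::real)" by (metis norm_of_real)
  then have "0 < n" "n < 1" by linarith+
  then show False by simp
qed

definition FF :: "real \<Rightarrow> complex \<Rightarrow> complex" where
  "FF b z = 2 * \<i> * exp (2 * complex_of_real pi * \<i> * complex_of_real b * z) / (1 - exp (2 * complex_of_real pi * \<i> * z))"

lemma FF_holo: "FF b holomorphic_on ball (1/2) (1/2)"
  unfolding FF_def using exp_ne1 by (intro holomorphic_intros) auto

lemma hd_exp: "(deriv ^^ n) (\<lambda>z. k * exp (a * z)) = (\<lambda>z. k * a ^ n * exp (a * z))"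
proof (induction n)
  case 0 then show ?case by simp
next
  case (Suc n)
  show ?case
  proof
    fix z
    have "((\<lambda>z. k * a ^ n * exp (a * z)) has_field_derivative k * a ^ Suc n * exp (a * z)) (at z)"
      by (auto intro!: derivative_eq_intros)
    then show "(deriv ^^ Suc n) (\<lambda>z. k * exp (a * z)) z = k * a ^ Suc n * exp (a * z)"
      using Suc by (simp add: DERIV_imp_deriv)
  qed
qed

lemma hd_H: "(deriv ^^ Suc n) (\<lambda>z. 1 - exp (a * z)) = (\<lambda>z. - (a ^ Suc n * exp (a * z)))"
proof (induction n)
  case 0
  show ?case
  proof
    fix z
    have "((\<lambda>z. 1 - exp (a * z)) has_field_derivative - (a ^ Suc 0 * exp (a * z))) (at z)"
      by (auto intro!: derivative_eq_intros)
    then show "(deriv ^^ Suc 0) (\<lambda>z. 1 - exp (a * z)) z = - (a ^ Suc 0 * exp (a * z))"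
      by (simp add: DERIV_imp_deriv)
  qed
next
  case (Suc n)
  show ?case
  proof
    fix z
    have "((\<lambda>z. - (a ^ Suc n * exp (a * z))) has_field_derivative - (a ^ Suc (Suc n) * exp (a * z))) (at z)"
      by (auto intro!: derivative_eq_intros)
    then show "(deriv ^^ Suc (Suc n)) (\<lambda>z. 1 - exp (a * z)) z = - (a ^ Suc (Suc n) * exp (a * z))"
      using Suc by (simp add: DERIV_imp_deriv)
  qed
qed

lemma half_in: "(1/2 :: complex) \<in> ball (1/2) (1/2)" by simp

lemma FF_val:
  "(deriv ^^ n) (FF b) (1/2) = \<i> * exp (complex_of_real pi * \<i> * complex_of_real b) * (2 * complex_of_real pi * \<i>) ^ n * complex_of_real (euler_poly n b)"
proof (induction n rule: less_induct)
  case (less n)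
  define c where "c = 2 * complex_of_real pi * \<i>"
  define K where "K = \<i> * exp (complex_of_real pi * \<i> * complex_of_real b)"
  define S where "S = ball (1/2 :: complex) (1/2)"
  define a where "a = (\<lambda>i. (deriv ^^ i) (FF b) (1/2))"
  define Hd where "Hd = (\<lambda>j. if j = 0 then 2 else c ^ j)"
  have e1: "exp (c * (1/2)) = -1"
    unfolding c_def by (simp add: exp_pi_i')
  have e2: "exp (c * complex_of_real b * (1/2)) = exp (complex_of_real pi * \<i> * complex_of_real b)"
    unfolding c_def by (simp add: mult_ac)
  have Hd: "(deriv ^^ j) (\<lambda>z. 1 - exp (c * z)) (1/2) = Hd j" for j
  proof (cases j)
    case 0 then show ?thesis using e1 by (simp add: Hd_def)
  next
    case (Suc j') then show ?thesis using e1 by (simp only: Suc hd_H) (simp add: Hd_def)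
  qed
  have ev: "eventually (\<lambda>w. FF b w * (1 - exp (c * w)) = (2 * \<i>) * exp ((c * complex_of_real b) * w)) (nhds (1/2))"
  proof -
    have "eventually (\<lambda>w. w \<in> S) (nhds (1/2))" unfolding S_def
      by (intro eventually_nhds_in_open) auto
    then show ?thesis
    proof (rule eventually_mono)
      fix w assume "w \<in> S"
      then have "1 - exp (c * w) \<noteq> 0" using exp_ne1[of w] unfolding S_def c_def by auto
      then show "FF b w * (1 - exp (c * w)) = (2 * \<i>) * exp ((c * complex_of_real b) * w)"
        unfolding FF_def c_def by (simp add: mult_ac)
    qed
  qed
  have "(\<Sum>i=0..n. of_nat (n choose i) * a i * Hd (n - i))
      = (deriv ^^ n) (\<lambda>w. FF b w * (1 - exp (c * w))) (1/2)"
    unfolding a_def Hd[symmetric]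
    by (rule higher_deriv_mult[symmetric, of _ S]) (auto simp: S_def FF_holo intro!: holomorphic_intros)
  also have "\<dots> = (deriv ^^ n) (\<lambda>w. (2 * \<i>) * exp ((c * complex_of_real b) * w)) (1/2)"
    by (rule higher_deriv_cong_ev[OF ev refl])
  also have "\<dots> = 2 * K * c ^ n * complex_of_real b ^ n"
    unfolding hd_exp using e2 by (simp add: K_def power_mult_distrib)
  finally have E: "(\<Sum>i<n. of_nat (n choose i) * a i * Hd (n - i)) + a n * 2 = 2 * K * c ^ n * complex_of_real b ^ n"
    by (simp add: atLeastLessThanSuc_atLeastAtMost[symmetric] atLeast0LessThan Hd_def)
  have "(\<Sum>i<n. of_nat (n choose i) * a i * Hd (n - i)) = (\<Sum>i<n. K * c ^ n * (of_nat (n choose i) * complex_of_real (euler_poly i b)))"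
  proof (intro sum.cong refl)
    fix i assume i: "i \<in> {..<n}"
    then have "a i = K * c ^ i * complex_of_real (euler_poly i b)" unfolding a_def K_def c_def using less by auto
    moreover have "Hd (n - i) = c ^ (n - i)" using i by (simp add: Hd_def)
    moreover have "c ^ i * c ^ (n - i) = c ^ n" using i by (simp add: power_add[symmetric])
    ultimately show "of_nat (n choose i) * a i * Hd (n - i) = K * c ^ n * (of_nat (n choose i) * complex_of_real (euler_poly i b))"
      by (simp add: mult_ac)
  qed
  also have "\<dots> = K * c ^ n * (\<Sum>i<n. of_nat (n choose i) * complex_of_real (euler_poly i b))"
    by (simp add: sum_distrib_left)
  also have "(\<Sum>i<n. of_nat (n choose i) * complex_of_real (euler_poly i b)) = 2 * complex_of_real b ^ n - 2 * complex_of_real (euler_poly n b)"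
  proof -
    have "(\<Sum>i<n. real (n choose i) * euler_poly i b) = 2 * b ^ n - 2 * euler_poly n b"
      using euler_rec[of n b] by (simp add: lessThan_Suc_atMost[symmetric])
    then have "complex_of_real (\<Sum>i<n. real (n choose i) * euler_poly i b) = complex_of_real (2 * b ^ n - 2 * euler_poly n b)" by simp
    then show ?thesis by simp
  qed
  finally have Ssum: "(\<Sum>i<n. of_nat (n choose i) * a i * Hd (n - i)) = K * c ^ n * (2 * complex_of_real b ^ n - 2 * complex_of_real (euler_poly n b))" .
  have "a n * 2 = 2 * K * c ^ n * complex_of_real b ^ n - (\<Sum>i<n. of_nat (n choose i) * a i * Hd (n - i))"
    using E by (metis add_diff_cancel_left')
  also have "\<dots> = 2 * (K * c ^ n * complex_of_real (euler_poly n b))"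
    unfolding Ssum by (simp add: algebra_simps)
  finally show ?case unfolding a_def K_def c_def by simp
qed

lemma base_id:
  assumes "0 < x" "x < 1"
  shows "(\<i> - complex_of_real (cot (pi * x))) * exp (2 * pi * \<i> * b * x) = FF b (complex_of_real x)"
proof -
  have sn: "sin (pi * x) > 0" using assms by (intro sin_gt_zero) auto
  have ex0: "exp (2 * complex_of_real pi * \<i> * complex_of_real x) = cis (2 * (pi * x))"
    by (simp add: cis_conv_exp mult_ac)
  have ex: "exp (2 * complex_of_real pi * \<i> * complex_of_real x) = Complex (cos (pi * x) ^ 2 - sin (pi * x) ^ 2) (2 * sin (pi * x) * cos (pi * x))"
    unfolding ex0 cis.code sin_double cos_double by simp
  have gen: "s > 0 \<Longrightarrow> s ^ 2 + c ^ 2 = 1 \<Longrightarrow> (\<i> - complex_of_real (c / s)) * (1 - Complex (c ^ 2 - s ^ 2) (2 * s * c)) = 2 * \<i>" for s c :: real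
    by (simp add: complex_eq_iff field_simps power2_eq_square) (metis distrib_left mult.commute mult.left_commute mult_1_right)
  have key: "(\<i> - complex_of_real (cot (pi * x))) * (1 - exp (2 * complex_of_real pi * \<i> * complex_of_real x)) = 2 * \<i>"
    unfolding ex cot_def using sn by (intro gen) auto
  have ne: "1 - exp (2 * complex_of_real pi * \<i> * complex_of_real x) \<noteq> 0"
    using key by auto
  have gen2: "A * D = k \<Longrightarrow> D \<noteq> 0 \<Longrightarrow> A * E = k * E / D" for A D k E :: complex
    by (simp add: field_simps)
  have tp: "complex_of_real (2 * pi) = 2 * complex_of_real pi" by simp
  show ?thesis unfolding FF_def tp by (rule gen2[OF key ne])
qed

lemma hv:
  assumes "x \<in> {0<..<1}"
  shows "higher_vderiv n (\<lambda>t. (\<i> - complex_of_real (cot (pi * t))) * exp (2 * pi * \<i> * b * t)) x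
         = (deriv ^^ n) (FF b) (complex_of_real x)"
  using assms
proof (induction n arbitrary: x)
  case 0 then show ?case using base_id[of x b] by simp
next
  case (Suc n)
  let ?f = "\<lambda>t. (\<i> - complex_of_real (cot (pi * t))) * exp (2 * pi * \<i> * b * t)"
  have inS: "complex_of_real x \<in> ball (1/2) (1/2)"
  proof -
    have "dist (1/2) (complex_of_real x) = dist (1/2) x"
      by (metis dist_of_real of_real_1 of_real_divide of_real_numeral)
    then show ?thesis using Suc.prems by (auto simp: dist_real_def split: abs_split)
  qed
  have "((deriv ^^ n) (FF b) has_field_derivative deriv ((deriv ^^ n) (FF b)) (complex_of_real x)) (at (complex_of_real x))"
    by (rule holomorphic_derivI[OF holomorphic_higher_deriv[OF FF_holo] _ inS]) auto
  then have "((\<lambda>t. (deriv ^^ n) (FF b) (complex_of_real t)) has_vector_derivative deriv ((deriv ^^ n) (FF b)) (complex_of_real x)) (at x)"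
    by (rule has_vector_derivative_real_field)
  then have "(higher_vderiv n ?f has_vector_derivative deriv ((deriv ^^ n) (FF b)) (complex_of_real x)) (at x)"
    by (rule has_vector_derivative_transform_within_open[of _ _ _ "{0<..<1}"]) (use Suc in auto)
  then show ?case by (simp add: vector_derivative_at)
qed

lemma fin_alg:
  fixes X Y P Q R Z I E :: complex
  assumes "X * Y = 1" "P / Q = R"
  shows "Z * X * (I * Y * P * E) / Q = 2 ^ 0 * R * I * Z * E"
proof -
  have "Z * X * (I * Y * P * E) / Q = (X * Y) * (Z * I * E) * (P / Q)"
    by (simp add: mult_ac)
  then show ?thesis using assms by (simp add: mult_ac)
qed

theorem lemma4p3:
  fixes m :: nat and \<beta> :: real
  assumes "m \<ge> 1"
  shows "F_fun m \<beta> (1/2) =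
    2 ^ (m - 1) * \<i> ^ m * exp (of_nat m * pi * \<i> / 2) * complex_of_real (euler_poly (m - 1) \<beta>)"
proof -
  obtain k where m: "m = Suc k" using assms by (cases m) auto
  have h: "higher_vderiv k (\<lambda>t. (\<i> - complex_of_real (cot (pi * t))) * exp (2 * pi * \<i> * \<beta> * t)) (1/2)
     = \<i> * exp (complex_of_real pi * \<i> * complex_of_real \<beta>) * (2 * complex_of_real pi * \<i>) ^ k * complex_of_real (euler_poly k \<beta>)"
    using hv[of "1/2" k \<beta>] FF_val[of k \<beta>] by simp
  have e: "exp (complex_of_real (- 2 * pi) * \<i> * complex_of_real \<beta> * complex_of_real (1/2)) * exp (complex_of_real pi * \<i> * complex_of_real \<beta>) = 1"
    by (simp add: exp_add[symmetric])
  have pk: "(2 * complex_of_real pi * \<i>) ^ k / complex_of_real (pi ^ k) = 2 ^ k * \<i> ^ k"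
    by (simp add: power_mult_distrib)
  show ?thesis
    unfolding F_fun_def m using h e pk
    apply simp
    apply (subst fin_alg[of _ _ _ _ "2 ^ k * \<i> ^ k"])
    apply (auto simp: mult_ac)
    done
qed

end
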